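(* Let $d,D$ be positive integers, $\Omega(d)=\{\ket{\varphi}\bra{\varphi}:\ket{\varphi}\in\mathbb{C}^d,\ \langle\varphi|\varphi\rangle=1\}$, $\mu$ a Borel probability measure on $\Omega(d)$ and $F$ a continuous function on $\Omega(d)$ whose values are Hermitian operators on $\mathbb{C}^D$, such that \[ \int\mathrm{d}\mu(\varphi)\,F(\varphi)\otimes\ket{\varphi}\bra{\varphi}^{\otimes N}\ge0\quad\text{for all } N\in\mathbb{N}. \] Then $F(\varphi)$ is positive semidefinite for $\mu$-almost every $\varphi$.
   Context: Points $\varphi\in\Omega(d)$ are identified with projectors $\ket{\varphi}\bra{\varphi}$; $\ge0$ means positive semidefinite as an operator on $\mathbb{C}^D\otimes(\mathbb{C}^d)^{\otimes N}$. *)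

theory Defs
  imports "HOL-Analysis.Analysis" "HOL-Probability.Probability"
begin

definition proj :: "complex^'d \<Rightarrow> complex^'d^'d" where
  "proj phi = (\<chi> i j. phi $ i * cnj (phi $ j))"

definition Omega :: "(complex^'d^'d) set" where
  "Omega = {proj phi | phi :: complex^'d. norm phi = 1}"

definition hermitian_mat :: "complex^'n^'n \<Rightarrow> bool" where
  "hermitian_mat A \<longleftrightarrow> (\<forall>i j. A $ i $ j = cnj (A $ j $ i))"

definition psd_on :: "'i set \<Rightarrow> ('i \<Rightarrow> 'i \<Rightarrow> complex) \<Rightarrow> bool" where
  "psd_on I M \<longleftrightarrow> (\<forall>v :: 'i \<Rightarrow> complex.
     let q = (\<Sum>i\<in>I. \<Sum>j\<in>I. cnj (v i) * M i j * v j) in Im q = 0 \<and> Re q \<ge> 0)"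

definition psd_mat :: "complex^'n^'n \<Rightarrow> bool" where
  "psd_mat A \<longleftrightarrow> psd_on UNIV (\<lambda>i j. A $ i $ j)"

text \<open>Index set of C^D \<otimes> (C^d)^{\<otimes>N}: pairs (a, is) with is a word of length N over 'd.\<close>
definition tidx :: "nat \<Rightarrow> ('D \<times> 'd list) set" where
  "tidx N = UNIV \<times> {is. length is = N}"

text \<open>Matrix entries of A \<otimes> P^{\<otimes>N} in the product basis.\<close>
definition kron_tpow :: "complex^'D^'D \<Rightarrow> complex^'d^'d \<Rightarrow> nat \<Rightarrow>
    ('D \<times> 'd list) \<Rightarrow> ('D \<times> 'd list) \<Rightarrow> complex" where
  "kron_tpow A P N x y =
     A $ fst x $ fst y * (\<Prod>k<N. P $ (snd x ! k) $ (snd y ! k))"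

end

theory Submission
  imports Defs
begin


lemma lists_Suc_UNIV:
  "{xs::'a list. length xs = Suc n} = (\<lambda>(x, xs). x#xs) ` (UNIV \<times> {xs. length xs = n})"
  by (auto simp: length_Suc_conv image_iff)

lemma sum_lists_prod:
  fixes g :: "'d::finite \<Rightarrow> 'd \<Rightarrow> complex"
  shows "(\<Sum>is\<in>{is::'d list. length is = N}. \<Sum>js\<in>{js::'d list. length js = N}.
            \<Prod>k<N. g (is!k) (js!k)) = (\<Sum>i\<in>UNIV. \<Sum>j\<in>UNIV. g i j)^N"
proof (induction N)
  case 0
  then show ?case by simp
next
  case (Suc n)
  have inj: "inj_on (\<lambda>(x::'d, xs). x#xs) (UNIV \<times> {xs. length xs = n})"
    by (auto simp: inj_on_def)
  have fin: "finite {xs::'d list. length xs = n}"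
    using finite_lists_length_eq[of "UNIV::'d set" n] by simp
  have "(\<Sum>is\<in>{is::'d list. length is = Suc n}. \<Sum>js\<in>{js::'d list. length js = Suc n}.
            \<Prod>k<Suc n. g (is!k) (js!k))
     = (\<Sum>(x,xs)\<in>UNIV \<times> {xs::'d list. length xs = n}. \<Sum>(y,ys)\<in>UNIV \<times> {ys::'d list. length ys = n}.
            g x y * (\<Prod>k<n. g (xs!k) (ys!k)))"
    unfolding lists_Suc_UNIV sum.reindex[OF inj]
    by (simp add: case_prod_beta prod.lessThan_Suc_shift del: prod.lessThan_Suc)
  also have "\<dots> = (\<Sum>x\<in>UNIV. \<Sum>xs\<in>{xs::'d list. length xs = n}. \<Sum>y\<in>UNIV. \<Sum>ys\<in>{ys::'d list. length ys = n}.
            g x y * (\<Prod>k<n. g (xs!k) (ys!k)))"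
    by (simp add: sum.cartesian_product[symmetric])
  also have "\<dots> = (\<Sum>x\<in>UNIV. \<Sum>y\<in>UNIV. g x y * (\<Sum>xs\<in>{xs::'d list. length xs = n}. \<Sum>ys\<in>{ys::'d list. length ys = n}.
            (\<Prod>k<n. g (xs!k) (ys!k))))"
    by (simp add: sum_distrib_left sum.swap[of _ "{xs::'d list. length xs = n}" UNIV])
  also have "\<dots> = (\<Sum>i\<in>UNIV. \<Sum>j\<in>UNIV. g i j)^Suc n"
    by (simp add: Suc.IH sum_distrib_right[symmetric])
  finally show ?case .
qed



lemma kron_quad:
  fixes A :: "complex^'D::finite^'D" and P :: "complex^'d::finite^'d"
    and v :: "'D \<Rightarrow> complex" and \<psi> :: "complex^'d" and N :: nat
  defines "V \<equiv> (\<lambda>x::'D \<times> 'd list. v (fst x) * (\<Prod>k<N. \<psi> $ (snd x ! k)))"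
  shows "(\<Sum>x\<in>tidx N. \<Sum>y\<in>tidx N. cnj (V x) * kron_tpow A P N x y * V y)
    = (\<Sum>a\<in>UNIV. \<Sum>b\<in>UNIV. cnj (v a) * A $ a $ b * v b) *
      (\<Sum>i\<in>UNIV. \<Sum>j\<in>UNIV. cnj (\<psi> $ i) * P $ i $ j * \<psi> $ j) ^ N"
proof -
  let ?L = "{is::'d list. length is = N}"
  have fin: "finite ?L"
    using finite_lists_length_eq[of "UNIV::'d set" N] by simp
  have cp: "\<And>f. (\<Sum>x\<in>UNIV \<times> ?L. f x) = (\<Sum>a\<in>UNIV. \<Sum>is\<in>?L. f (a,is))"
    by (simp add: sum.cartesian_product)
  have "(\<Sum>x\<in>tidx N. \<Sum>y\<in>tidx N. cnj (V x) * kron_tpow A P N x y * V y)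
     = (\<Sum>a\<in>UNIV. \<Sum>is\<in>?L. \<Sum>b\<in>UNIV. \<Sum>js\<in>?L.
          (cnj (v a) * A $ a $ b * v b) *
          (\<Prod>k<N. cnj (\<psi> $ (is!k)) * P $ (is!k) $ (js!k) * \<psi> $ (js!k)))"
    unfolding tidx_def cp V_def kron_tpow_def
    by (simp add: prod.distrib sum_distrib_left sum.swap[of _ ?L UNIV] mult_ac)
  also have "\<dots> = (\<Sum>a\<in>UNIV. \<Sum>b\<in>UNIV. (cnj (v a) * A $ a $ b * v b) *
          (\<Sum>is\<in>?L. \<Sum>js\<in>?L.
          (\<Prod>k<N. cnj (\<psi> $ (is!k)) * P $ (is!k) $ (js!k) * \<psi> $ (js!k))))"
    by (simp add: sum_distrib_left sum.swap[of _ ?L UNIV])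
  also have "\<dots> = (\<Sum>a\<in>UNIV. \<Sum>b\<in>UNIV. cnj (v a) * A $ a $ b * v b) *
      (\<Sum>i\<in>UNIV. \<Sum>j\<in>UNIV. cnj (\<psi> $ i) * P $ i $ j * \<psi> $ j) ^ N"
    using sum_lists_prod[of "\<lambda>i j. cnj (\<psi> $ i) * P $ i $ j * \<psi> $ j" N]
    by (simp add: sum_distrib_right)
  finally show ?thesis .
qed



lemma norm_vec_sq: "norm (x::'a::real_normed_vector^'n::finite)^2 = (\<Sum>i\<in>UNIV. norm (x$i)^2)"
  unfolding norm_vec_def L2_set_def by (simp add: sum_nonneg)

lemma cnorm_vec_sq: "complex_of_real (norm (x::complex^'n::finite)^2) = (\<Sum>i\<in>UNIV. x$i * cnj (x$i))"
  unfolding norm_vec_sq of_real_sum by (simp only: complex_norm_square)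

lemma cnorm_mat_sq: "complex_of_real (norm (X::complex^'n::finite^'n)^2) = (\<Sum>i\<in>UNIV. \<Sum>j\<in>UNIV. X$i$j * cnj (X$i$j))"
  unfolding norm_vec_sq of_real_sum cnorm_vec_sq[symmetric] norm_vec_sq of_real_sum ..

lemma unit_sum: "norm (\<phi>::complex^'n::finite) = 1 \<Longrightarrow> (\<Sum>i\<in>UNIV. \<phi>$i * cnj (\<phi>$i)) = 1"
  using cnorm_vec_sq[of \<phi>] by simp

lemma w_eq: "(\<Sum>i\<in>UNIV. \<Sum>j\<in>UNIV. cnj (\<psi>$i) * proj \<phi> $i$j * \<psi>$j)
   = (\<Sum>i\<in>UNIV. cnj (\<psi>$i) * \<phi>$i) * cnj (\<Sum>i\<in>UNIV. cnj (\<psi>$i) * (\<phi>::complex^'n::finite)$i)"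
  by (simp add: proj_def sum_product mult_ac)

lemma dist_eq:
  fixes \<phi> \<psi> :: "complex^'n::finite"
  assumes "norm \<phi> = 1" "norm \<psi> = 1"
  shows "complex_of_real (norm (proj \<phi> - proj \<psi>)^2)
    = 2 - 2 * ((\<Sum>i\<in>UNIV. cnj (\<psi>$i) * \<phi>$i) * cnj (\<Sum>i\<in>UNIV. cnj (\<psi>$i) * \<phi>$i))"
proof -
  have a: "(\<Sum>i\<in>UNIV. \<phi>$i * cnj (\<phi>$i)) = 1" "(\<Sum>i\<in>UNIV. \<psi>$i * cnj (\<psi>$i)) = 1"
    using unit_sum assms by auto
  have "complex_of_real (norm (proj \<phi> - proj \<psi>)^2)
     = (\<Sum>i\<in>UNIV. \<Sum>j\<in>UNIV. (\<phi>$i * cnj (\<phi>$j) - \<psi>$i * cnj (\<psi>$j)) * cnj (\<phi>$i * cnj (\<phi>$j) - \<psi>$i * cnj (\<psi>$j)))"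
    unfolding cnorm_mat_sq by (simp add: proj_def)
  also have "\<dots> = (\<Sum>i\<in>UNIV. \<phi>$i * cnj (\<phi>$i)) * (\<Sum>i\<in>UNIV. \<phi>$i * cnj (\<phi>$i))
     + (\<Sum>i\<in>UNIV. \<psi>$i * cnj (\<psi>$i)) * (\<Sum>i\<in>UNIV. \<psi>$i * cnj (\<psi>$i))
     - (\<Sum>i\<in>UNIV. cnj (\<psi>$i) * \<phi>$i) * cnj (\<Sum>i\<in>UNIV. cnj (\<psi>$i) * \<phi>$i)
     - (\<Sum>i\<in>UNIV. cnj (\<psi>$i) * \<phi>$i) * cnj (\<Sum>i\<in>UNIV. cnj (\<psi>$i) * \<phi>$i)"
    apply (simp add: sum_product algebra_simps sum.distrib sum_subtractf)
    apply (subst sum.swap) apply (simp add: mult_ac)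
    done
  finally show ?thesis using a by simp
qed



lemma integrable_cont:
  fixes g :: "'a::metric_space \<Rightarrow> 'b::{banach, second_countable_topology}"
  assumes prob: "prob_space \<mu>" and space: "space \<mu> = \<Omega>"
    and sets: "sets \<mu> = sets (restrict_space borel \<Omega>)"
    and cpt: "compact \<Omega>" and cont: "continuous_on \<Omega> g"
  shows "integrable \<mu> g"
proof -
  interpret prob_space \<mu> by (rule prob)
  have meas: "g \<in> borel_measurable \<mu>"
  proof -
    have "measurable \<mu> (borel::'b measure) = measurable (restrict_space borel \<Omega>) borel"
      by (rule measurable_cong_sets[OF sets refl])
    then show ?thesis using borel_measurable_continuous_on_restrict[OF cont] by simp
  qed
  have "compact (g ` \<Omega>)" using compact_continuous_image[OF cont cpt] .
  then obtain B where B: "\<forall>x\<in>g ` \<Omega>. norm x \<le> B"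
    using compact_imp_bounded bounded_iff by metis
  show ?thesis
    by (rule integrable_const_bound[where B=B]) (use B space meas in auto)
qed

lemma key:
  fixes \<mu> :: "'a::metric_space measure" and f :: "'a \<Rightarrow> real"
  assumes prob: "prob_space \<mu>" and space: "space \<mu> = \<Omega>"
    and sets: "sets \<mu> = sets (restrict_space borel \<Omega>)"
    and cpt: "compact \<Omega>" and cont: "continuous_on \<Omega> f"
    and P0: "P0 \<in> \<Omega>" and neg: "f P0 < 0"
    and wnn: "\<forall>P\<in>\<Omega>. 0 \<le> 1 - dist P P0 ^ 2 / 2"
    and pos: "\<forall>N. 0 \<le> integral\<^sup>L \<mu> (\<lambda>P. f P * (1 - dist P P0 ^ 2 / 2) ^ N)"
  shows "\<exists>U. open U \<and> P0 \<in> U \<and> U \<inter> \<Omega> \<in> null_sets \<mu>"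
proof -
  interpret prob_space \<mu> by (rule prob)
  define c where "c = - f P0 / 2"
  have c: "c > 0" using neg by (simp add: c_def)
  obtain \<delta> where \<delta>: "\<delta> > 0" "\<forall>P\<in>\<Omega>. dist P P0 < \<delta> \<longrightarrow> dist (f P) (f P0) < c"
    using cont P0 c unfolding continuous_on_iff by metis
  define e where "e = min \<delta> 1"
  have e: "e > 0" "e \<le> 1" "e \<le> \<delta>" using \<delta> by (auto simp: e_def)
  have fneg: "f P < - c" if "P \<in> \<Omega>" "dist P P0 < e" for P
    using \<delta>(2) that e unfolding c_def dist_real_def by force
  define U where "U = ball P0 (e/2)"
  have openU: "open U" and P0U: "P0 \<in> U" using e by (auto simp: U_def)
  have Umeas: "U \<inter> \<Omega> \<in> sets \<mu>"
    unfolding sets sets_restrict_space using openU by auto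
  define m where "m = measure \<mu> (U \<inter> \<Omega>)"
  have "m = 0"
  proof (rule ccontr)
    assume "m \<noteq> 0"
    then have m: "m > 0" by (simp add: m_def order_le_neq_trans)
    have "compact (f ` \<Omega>)" using compact_continuous_image[OF cont cpt] .
    then obtain K0 where K0: "\<forall>x\<in>f ` \<Omega>. norm x \<le> K0"
      using compact_imp_bounded bounded_iff by metis
    define K where "K = max K0 0"
    have K: "K \<ge> 0" "\<And>P. P \<in> \<Omega> \<Longrightarrow> \<bar>f P\<bar> \<le> K" using K0 by (auto simp: K_def)
    define A where "A = 1 - e^2/8"
    define B where "B = 1 - e^2/2"
    have e2: "e^2 \<le> 1" "e^2 > 0" using e by (auto simp: power_le_one)
    have AB: "0 < B" "B < A" using e2 by (auto simp: A_def B_def)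
    let ?w = "\<lambda>P. 1 - dist P P0 ^ 2 / 2"
    have bound: "f P * ?w P ^ N \<le> - c * A ^ N * indicator (U \<inter> \<Omega>) P + K * B ^ N"
      if P: "P \<in> \<Omega>" for P N
    proof -
      have w0: "0 \<le> ?w P" using wnn P by auto
      have KB: "0 \<le> K * B ^ N" using K AB by simp
      show ?thesis
      proof (cases "dist P P0 < e/2")
        case True
        have "dist P P0 ^ 2 < (e/2)^2"
          using True by (intro power_strict_mono) auto
        then have "A \<le> ?w P" by (simp add: A_def power_divide)
        then have "A ^ N \<le> ?w P ^ N" using AB by (intro power_mono) auto
        moreover have "f P < - c" using fneg P True e by auto
        ultimately have "f P * ?w P ^ N \<le> - c * A ^ N"
        proof -
          have "f P * ?w P ^ N \<le> - c * ?w P ^ N"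
            using \<open>f P < - c\<close> w0 by (intro mult_right_mono) auto
          also have "\<dots> \<le> - c * A ^ N" using c \<open>A ^ N \<le> ?w P ^ N\<close> by simp
          finally show ?thesis .
        qed
        then show ?thesis using True P KB by (simp add: U_def dist_commute)
      next
        case False
        then have ind: "indicator (U \<inter> \<Omega>) P = (0::real)" by (simp add: U_def dist_commute)
        show ?thesis
        proof (cases "dist P P0 < e")
          case True
          then have "f P < 0" using fneg P c by force
          then have "f P * ?w P ^ N \<le> 0" using w0 by (simp add: mult_nonpos_nonneg)
          then show ?thesis using ind KB by simp
        next
          case F2: False
          have "e^2 \<le> dist P P0 ^ 2" using F2 e by (intro power_mono) auto
          then have "?w P \<le> B" by (simp add: B_def)
          then have "?w P ^ N \<le> B ^ N" using w0 by (intro power_mono) auto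
          have "f P * ?w P ^ N \<le> \<bar>f P\<bar> * ?w P ^ N" using w0 by (simp add: mult_right_mono)
          also have "\<dots> \<le> K * B ^ N"
            using K(1) K(2)[OF P] \<open>?w P ^ N \<le> B ^ N\<close> w0
            by (intro mult_mono) auto
          finally show ?thesis using ind by simp
        qed
      qed
    qed
    have cw: "continuous_on \<Omega> (\<lambda>P. f P * ?w P ^ N)" for N
      by (intro continuous_on_mult cont continuous_on_power continuous_on_diff continuous_on_const
          continuous_on_divide continuous_on_dist continuous_on_id) auto
    have ineq: "0 \<le> - c * A ^ N * m + K * B ^ N" for N
    proof -
      have "0 \<le> integral\<^sup>L \<mu> (\<lambda>P. f P * ?w P ^ N)" using pos by auto
      also have "\<dots> \<le> integral\<^sup>L \<mu> (\<lambda>P. - c * A ^ N * indicator (U \<inter> \<Omega>) P + K * B ^ N)"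
        apply (rule integral_mono)
          apply (rule integrable_cont[OF prob space sets cpt cw])
        subgoal using Umeas by (auto simp: less_top[symmetric])
        using bound space by auto
      also have "\<dots> = - c * A ^ N * m + K * B ^ N"
      proof -
        have i1: "integrable \<mu> (\<lambda>P. - c * A ^ N * indicator (U \<inter> \<Omega>) P :: real)"
          using Umeas by (auto simp: less_top[symmetric])
        have "integral\<^sup>L \<mu> (\<lambda>P. - c * A ^ N * indicator (U \<inter> \<Omega>) P + K * B ^ N)
          = integral\<^sup>L \<mu> (\<lambda>P. - c * A ^ N * indicator (U \<inter> \<Omega>) P) + integral\<^sup>L \<mu> (\<lambda>P. K * B ^ N)"
          by (rule Bochner_Integration.integral_add[OF i1]) auto
        moreover have "measure \<mu> \<Omega> = 1" using prob_space.prob_space[OF prob] space by simp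
        ultimately show ?thesis using Umeas by (simp add: m_def space Int_absorb2)
      qed
      finally show ?thesis .
    qed
    have "(\<lambda>N. (B / A) ^ N) \<longlonglongrightarrow> 0"
      using AB by (intro LIMSEQ_power_zero) auto
    then have "eventually (\<lambda>N. (B / A) ^ N < c * m / (K + 1)) sequentially"
      using c m K by (intro order_tendstoD) auto
    then obtain N where N: "(B / A) ^ N < c * m / (K + 1)"
      unfolding eventually_sequentially by blast
    have An: "A ^ N > 0" using AB by simp
    have "K * B ^ N = K * (B/A)^N * A ^ N" using An AB by (simp add: power_divide)
    also have "\<dots> \<le> K * (c * m / (K + 1)) * A ^ N"
      using N K An by (intro mult_right_mono mult_left_mono) auto
    also have "\<dots> < c * m * A ^ N"
    proof -
      have "K * (c * m / (K + 1)) < c * m" using K c m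
        by (simp add: field_simps)
      then show ?thesis using An by (rule mult_strict_right_mono)
    qed
    finally show False using ineq[of N] by (simp add: algebra_simps)
  qed
  then have "U \<inter> \<Omega> \<in> null_sets \<mu>"
    using Umeas by (simp add: m_def emeasure_eq_measure null_sets_def)
  then show ?thesis using openU P0U by blast
qed



definition qf :: "('D::finite \<Rightarrow> complex) \<Rightarrow> complex^'D^'D \<Rightarrow> complex" where
  "qf v A = (\<Sum>a\<in>UNIV. \<Sum>b\<in>UNIV. cnj (v a) * A $ a $ b * v b)"

lemma qf_real: "hermitian_mat A \<Longrightarrow> cnj (qf v A) = qf v A"
proof -
  assume h: "hermitian_mat A"
  have c: "cnj (A $ i $ j) = A $ j $ i" for i j
    using h unfolding hermitian_mat_def by (metis complex_cnj_cnj)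
  have "cnj (qf v A) = (\<Sum>a\<in>UNIV. \<Sum>b\<in>UNIV. v a * A $ b $ a * cnj (v b))"
    unfolding qf_def by (simp add: c)
  also have "\<dots> = qf v A"
    unfolding qf_def by (subst sum.swap) (simp add: mult_ac)
  finally show ?thesis .
qed

lemma qf_real': "hermitian_mat A \<Longrightarrow> qf v A = complex_of_real (Re (qf v A))"
  using qf_real[of A v] by (metis Reals_cnj_iff complex_is_Real_iff of_real_Re)

lemma psd_mat_iff: "hermitian_mat A \<Longrightarrow> psd_mat A \<longleftrightarrow> (\<forall>v. Re (qf v A) \<ge> 0)"
  unfolding psd_mat_def psd_on_def Let_def qf_def[symmetric]
  using qf_real' by (metis Im_complex_of_real)

lemma continuous_proj: "continuous_on S (proj :: complex^'d::finite \<Rightarrow> _)"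
  unfolding proj_def
  by (intro continuous_intros continuous_on_cnj)

lemma compact_Omega: "compact (Omega :: (complex^'d::finite^'d) set)"
proof -
  have e: "(Omega :: (complex^'d::finite^'d) set) = (proj :: complex^'d \<Rightarrow> _) ` sphere 0 1"
    unfolding Omega_def by auto
  show ?thesis unfolding e by (rule compact_continuous_image[OF continuous_proj compact_sphere])
qed



lemma W_eq:
  fixes \<psi> :: "complex^'d::finite"
  assumes "norm \<psi> = 1" "P \<in> Omega"
  shows "(\<Sum>i\<in>UNIV. \<Sum>j\<in>UNIV. cnj (\<psi> $ i) * P $ i $ j * \<psi> $ j)
        = complex_of_real (1 - dist P (proj \<psi>) ^ 2 / 2)"
    and "0 \<le> 1 - dist P (proj \<psi>) ^ 2 / 2"
proof -
  obtain \<phi> :: "complex^'d" where \<phi>: "norm \<phi> = 1" "P = proj \<phi>" using assms(2) unfolding Omega_def by auto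
  define S where "S = (\<Sum>i\<in>UNIV. cnj (\<psi>$i) * \<phi>$i)"
  have d: "complex_of_real (dist P (proj \<psi>) ^ 2) = 2 - 2 * (S * cnj S)"
    using dist_eq[OF \<phi>(1) assms(1)] \<phi>(2) by (simp add: dist_norm S_def)
  have Sc: "S * cnj S = complex_of_real (cmod S ^ 2)" by (rule complex_norm_square[symmetric])
  have "(\<Sum>i\<in>UNIV. \<Sum>j\<in>UNIV. cnj (\<psi> $ i) * P $ i $ j * \<psi> $ j) = S * cnj S"
    using w_eq \<phi>(2) S_def by simp
  also have "\<dots> = complex_of_real (1 - dist P (proj \<psi>) ^ 2 / 2)"
    using d by (simp add: field_simps)
  finally show "(\<Sum>i\<in>UNIV. \<Sum>j\<in>UNIV. cnj (\<psi> $ i) * P $ i $ j * \<psi> $ j)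
        = complex_of_real (1 - dist P (proj \<psi>) ^ 2 / 2)" .
  have "complex_of_real (dist P (proj \<psi>) ^ 2) = complex_of_real (2 - 2 * cmod S ^ 2)"
    using d Sc by simp
  then have "dist P (proj \<psi>) ^ 2 = 2 - 2 * cmod S ^ 2" using of_real_eq_iff by blast
  then show "0 \<le> 1 - dist P (proj \<psi>) ^ 2 / 2" by simp
qed



theorem corollary3:
  fixes \<mu> :: "(complex^'d^'d) measure"
    and F :: "complex^'d^'d \<Rightarrow> complex^'D^'D"
  assumes prob: "prob_space \<mu>"
    and space: "space \<mu> = Omega"
    and sets: "sets \<mu> = sets (restrict_space borel Omega)"
    and cont: "continuous_on Omega F"
    and herm: "\<forall>\<phi>\<in>Omega. hermitian_mat (F \<phi>)"
    and pos: "\<forall>N::nat. psd_on (tidx N)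
                 (\<lambda>x y. integral\<^sup>L \<mu> (\<lambda>\<phi>. kron_tpow (F \<phi>) \<phi> N x y))"
  shows "AE \<phi> in \<mu>. psd_mat (F \<phi>)"
proof -
  interpret prob_space \<mu> by (rule prob)
  have cpt: "compact (Omega :: (complex^'d^'d) set)" by (rule compact_Omega)
  have contq: "continuous_on Omega (\<lambda>P. qf v (F P))" for v
    unfolding qf_def by (intro continuous_intros cont)
  have local: "\<exists>U. open U \<and> P0 \<in> U \<and> U \<inter> Omega \<in> null_sets \<mu>"
    if P0: "P0 \<in> Omega" and np: "\<not> psd_mat (F P0)" for P0
  proof -
    obtain v where v: "Re (qf v (F P0)) < 0"
      using psd_mat_iff herm P0 np by (meson not_le)
    obtain \<psi> :: "complex^'d" where \<psi>: "norm \<psi> = 1" "P0 = proj \<psi>"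
      using P0 unfolding Omega_def by auto
    define f where "f P = Re (qf v (F P))" for P
    have contf: "continuous_on Omega f"
      unfolding f_def by (intro continuous_intros contq)
    have pos': "\<forall>N. 0 \<le> integral\<^sup>L \<mu> (\<lambda>P. f P * (1 - dist P P0 ^ 2 / 2) ^ N)"
    proof
      fix N :: nat
      define V where "V = (\<lambda>x::'D \<times> 'd list. v (fst x) * (\<Prod>k<N. \<psi> $ (snd x ! k)))"
      have int: "integrable \<mu> (\<lambda>P. kron_tpow (F P) P N x y)" for x y
        by (rule integrable_cont[OF prob space sets cpt])
          (unfold kron_tpow_def, intro continuous_intros cont)
      have 1: "0 \<le> Re (\<Sum>x\<in>tidx N. \<Sum>y\<in>tidx N.
           cnj (V x) * integral\<^sup>L \<mu> (\<lambda>P. kron_tpow (F P) P N x y) * V y)"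
        using pos unfolding psd_on_def Let_def by blast
      have 2: "(\<Sum>x\<in>tidx N. \<Sum>y\<in>tidx N.
           cnj (V x) * integral\<^sup>L \<mu> (\<lambda>P. kron_tpow (F P) P N x y) * V y)
         = integral\<^sup>L \<mu> (\<lambda>P. \<Sum>x\<in>tidx N. \<Sum>y\<in>tidx N. cnj (V x) * kron_tpow (F P) P N x y * V y)"
        by (simp add: Bochner_Integration.integral_sum integrable_sum int)
      have 3: "integral\<^sup>L \<mu> (\<lambda>P. \<Sum>x\<in>tidx N. \<Sum>y\<in>tidx N. cnj (V x) * kron_tpow (F P) P N x y * V y)
         = integral\<^sup>L \<mu> (\<lambda>P. complex_of_real (f P * (1 - dist P P0 ^ 2 / 2) ^ N))"
      proof (rule Bochner_Integration.integral_cong[OF refl])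
        fix P assume "P \<in> space \<mu>"
        then have P: "P \<in> Omega" using space by simp
        show "(\<Sum>x\<in>tidx N. \<Sum>y\<in>tidx N. cnj (V x) * kron_tpow (F P) P N x y * V y)
          = complex_of_real (f P * (1 - dist P P0 ^ 2 / 2) ^ N)"
        proof -
          have hP: "hermitian_mat (F P)" using herm P by blast
          have a: "(\<Sum>x\<in>tidx N. \<Sum>y\<in>tidx N. cnj (V x) * kron_tpow (F P) P N x y * V y)
            = qf v (F P) * (\<Sum>i\<in>UNIV. \<Sum>j\<in>UNIV. cnj (\<psi> $ i) * P $ i $ j * \<psi> $ j) ^ N"
            unfolding V_def qf_def by (rule kron_quad)
          have b: "qf v (F P) = complex_of_real (f P)"
            unfolding f_def by (rule qf_real'[OF hP])
          show ?thesis
            unfolding a b W_eq(1)[OF \<psi>(1) P, folded \<psi>(2)] by simp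
        qed
      qed
      show "0 \<le> integral\<^sup>L \<mu> (\<lambda>P. f P * (1 - dist P P0 ^ 2 / 2) ^ N)"
        using 1 unfolding 2 3 integral_complex_of_real Re_complex_of_real .
    qed
    have wnn: "\<forall>P\<in>Omega. 0 \<le> 1 - dist P P0 ^ 2 / 2"
      using W_eq(2)[OF \<psi>(1)] \<psi>(2) by auto
    show ?thesis
      by (rule key[OF prob space sets cpt contf P0 _ wnn pos']) (use v in \<open>simp add: f_def\<close>)
  qed
  define \<F> where "\<F> = {U :: (complex^'d^'d) set. open U \<and> U \<inter> Omega \<in> null_sets \<mu>}"
  obtain \<F>' where F': "\<F>' \<subseteq> \<F>" "countable \<F>'" "\<Union>\<F>' = \<Union>\<F>"
    using Lindelof[of \<F>] unfolding \<F>_def by blast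
  have null: "(\<Union>U\<in>\<F>'. U \<inter> Omega) \<in> null_sets \<mu>"
    using F' by (intro null_sets_UN') (auto simp: \<F>_def)
  show ?thesis
  proof (rule AE_I'[OF null])
    show "{x \<in> space \<mu>. \<not> psd_mat (F x)} \<subseteq> (\<Union>U\<in>\<F>'. U \<inter> Omega)"
    proof
      fix x assume "x \<in> {x \<in> space \<mu>. \<not> psd_mat (F x)}"
      then have x: "x \<in> Omega" "\<not> psd_mat (F x)" using space by auto
      obtain U where "open U" "x \<in> U" "U \<inter> Omega \<in> null_sets \<mu>" using local[OF x] by blast
      then have "x \<in> \<Union>\<F>" unfolding \<F>_def by blast
      then have "x \<in> \<Union>\<F>'" using F' by simp
      then show "x \<in> (\<Union>U\<in>\<F>'. U \<inter> Omega)" using x by blast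
    qed
  qed
qed

end
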